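(* Let $p\in(0,1)$ and let $\theta\ge 2$ be an integer. There exists a constant $C_p>0$ such that, with high probability over the choice of $G_n\sim\mathcal{G}(n,\theta+1)$, the discrete-time threshold-$\theta$ contact process with parameter $p$ on $G_n$ started from the all-infected state $X_0\equiv\mathbf{1}$ satisfies, with high probability, $X_t=\mathbf{0}$ for all $t\ge n^{C_p}$.
   Context: $\mathcal{G}(n,d)$ denotes the random $d$-regular multigraph given by the configuration model: each of the $n$ vertices receives $d$ half-edges (with $dn$ even) and all half-edges are paired by a uniformly random perfect matching, each pair forming an edge (loops and multiple edges allowed). The number of neighbors of $v$ in a set $W$ means the number of half-edges at $v$ whose partner is attached to a vertex of $W$. Discrete-time threshold-$\theta$ contact process with parameter $p$ on $G=(V,E)$: state $X_t\in\{0,1\}^V$ (1 = infected); given $X_t$, independently for all $v$, if $v$ has at least $\theta$ infected neighbors then $X_{t+1}(v)=1$ with probability $p$ and $0$ otherwise; if $v$ has fewer than $\theta$ infected neighbors then $X_{t+1}(v)=0$. "With high probability" means with probability tending to $1$ as $n\to\infty$. *)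

theory Defs
  imports "HOL-Probability.Probability"
begin

text \<open>Vertices are 0..n-1, half-edges are 0..d*n-1, and
  half-edge h is attached to vertex h div d. A configuration is a perfect matching of the
  half-edges, encoded as a fixed-point-free involution on {..<d*n} (identity outside).\<close>

definition matchings :: "nat \<Rightarrow> nat \<Rightarrow> (nat \<Rightarrow> nat) set" where
  "matchings n d = {m. (\<forall>h < d*n. m h < d*n \<and> m h \<noteq> h \<and> m (m h) = h) \<and> (\<forall>h. d*n \<le> h \<longrightarrow> m h = h)}"

definition config_model :: "nat \<Rightarrow> nat \<Rightarrow> (nat \<Rightarrow> nat) pmf" where
  "config_model n d = pmf_of_set (matchings n d)"

definition nbrs_in :: "nat \<Rightarrow> nat \<Rightarrow> (nat \<Rightarrow> nat) \<Rightarrow> (nat \<Rightarrow> bool) \<Rightarrow> nat \<Rightarrow> nat" where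
  "nbrs_in n d m W v = card {h. h < d*n \<and> h div d = v \<and> W (m h div d)}"

text \<open>States: functions nat => bool (True = infected), False outside {..<n}.
  One step of the discrete-time threshold-theta contact process with parameter p.\<close>
definition cp_step :: "nat \<Rightarrow> nat \<Rightarrow> (nat \<Rightarrow> nat) \<Rightarrow> nat \<Rightarrow> real \<Rightarrow> (nat \<Rightarrow> bool) \<Rightarrow> (nat \<Rightarrow> bool) pmf" where
  "cp_step n d m \<theta> p X = Pi_pmf {..<n} False
     (\<lambda>v. if \<theta> \<le> nbrs_in n d m X v then bernoulli_pmf p else return_pmf False)"

fun cp_traj :: "nat \<Rightarrow> nat \<Rightarrow> (nat \<Rightarrow> nat) \<Rightarrow> nat \<Rightarrow> real \<Rightarrow> (nat \<Rightarrow> bool) \<Rightarrow> nat \<Rightarrow> (nat \<Rightarrow> bool) list pmf" where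
  "cp_traj n d m \<theta> p X0 0 = return_pmf [X0]"
| "cp_traj n d m \<theta> p X0 (Suc k) =
     cp_traj n d m \<theta> p X0 k \<bind> (\<lambda>xs. map_pmf (\<lambda>y. xs @ [y]) (cp_step n d m \<theta> p (last xs)))"

definition all_infected :: "nat \<Rightarrow> nat \<Rightarrow> bool" where
  "all_infected n = (\<lambda>v. v < n)"

definition healthy :: "nat \<Rightarrow> bool" where
  "healthy = (\<lambda>v. False)"

text \<open>The probability of the infinite-horizon event "X_t \<noteq> 0 for some t \<ge> n^C"
  is the supremum over k of these quantities (continuity of measure).\<close>
definition survive_prob :: "nat \<Rightarrow> nat \<Rightarrow> (nat \<Rightarrow> nat) \<Rightarrow> nat \<Rightarrow> real \<Rightarrow> real \<Rightarrow> nat \<Rightarrow> real" where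
  "survive_prob n d m \<theta> p C k =
     measure_pmf.prob (cp_traj n d m \<theta> p (all_infected n) k)
       {xs. \<exists>t \<le> k. real n powr C \<le> real t \<and> xs ! t \<noteq> healthy}"

end

theory Submission
  imports Defs "HOL-Real_Asymp.Real_Asymp"
begin


definition absorbing :: "nat \<Rightarrow> nat \<Rightarrow> (nat \<Rightarrow> nat) \<Rightarrow> nat set \<Rightarrow> bool" where
  "absorbing n d m S \<longleftrightarrow> S \<subseteq> {..<n} \<and> (\<forall>v\<in>S. 2 \<le> nbrs_in n d m (\<lambda>x. x \<in> S) v)"

lemma div_iff: "0 < (d::nat) \<Longrightarrow> h div d = v \<longleftrightarrow> v * d \<le> h \<and> h < (v+1) * d"
  by (metis div_less_iff_less_mult le_antisym less_add_one
    less_eq_div_iff_mult_less_eq less_inc_imp_less_eq)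

locale G =
  fixes n d :: nat and m :: "nat \<Rightarrow> nat"
  assumes mm: "m \<in> matchings n d" and d3: "3 \<le> d"
begin

lemma m_lt: "h < d*n \<Longrightarrow> m h < d*n" and m_ne: "h < d*n \<Longrightarrow> m h \<noteq> h"
  and m_inv: "h < d*n \<Longrightarrow> m (m h) = h"
  using mm by (auto simp: matchings_def)

lemma m_inj: "h1 < d*n \<Longrightarrow> h2 < d*n \<Longrightarrow> m h1 = m h2 \<Longrightarrow> h1 = h2"
  by (metis m_inv)

lemma div_lt: "h < d*n \<Longrightarrow> h div d < n"
  by (metis less_mult_imp_div_less mult.commute)

lemma part_lt: "h < d*n \<Longrightarrow> m h div d < n"
  using div_lt m_lt by blast

lemma at_eq: "v < n \<Longrightarrow> {h. h < d*n \<and> h div d = v} = {v * d..<(v+1) * d}"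
proof -
  assume v: "v < n"
  have "(v+1) * d \<le> n * d" using v by (intro mult_le_mono1) simp
  then have "(v+1) * d \<le> d*n" by (simp add: mult.commute)
  moreover have "h div d = v \<longleftrightarrow> v * d \<le> h \<and> h < (v+1) * d" for h
    using d3 by (intro div_iff) auto
  note iff = this
  show ?thesis
  proof (rule set_eqI)
    fix h
    show "h \<in> {h. h < d*n \<and> h div d = v} \<longleftrightarrow> h \<in> {v * d..<(v+1) * d}"
      unfolding mem_Collect_eq atLeastLessThan_iff iff using \<open>(v+1) * d \<le> d*n\<close> by linarith
  qed
qed

lemma card_at: "v < n \<Longrightarrow> card {h. h < d*n \<and> h div d = v} = d"
  by (simp add: at_eq)

lemma fin_nb: "finite {h. h < d*n \<and> h div d = v \<and> P h}"
  by (rule finite_subset[of _ "{..<d*n}"]) auto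

lemma nbrs_mono: "(\<And>x. W x \<Longrightarrow> W' x) \<Longrightarrow> nbrs_in n d m W v \<le> nbrs_in n d m W' v"
  unfolding nbrs_in_def by (rule card_mono[OF fin_nb]) auto

lemma nbrs_split: "v < n \<Longrightarrow> nbrs_in n d m W v + nbrs_in n d m (\<lambda>x. \<not> W x) v = d"
proof -
  assume v: "v < n"
  have "nbrs_in n d m W v + nbrs_in n d m (\<lambda>x. \<not> W x) v =
    card ({h. h < d*n \<and> h div d = v \<and> W (m h div d)} \<union> {h. h < d*n \<and> h div d = v \<and> \<not> W (m h div d)})"
    unfolding nbrs_in_def by (subst card_Un_disjoint) (auto intro: fin_nb)
  also have "\<dots> = card {h. h < d*n \<and> h div d = v}"
    by (rule arg_cong[where f=card]) auto
  finally show ?thesis using card_at v by simp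
qed

lemma two_le:
  assumes "h1 \<noteq> h2" "h1 < d*n" "h2 < d*n" "h1 div d = v" "h2 div d = v"
    "W (m h1 div d)" "W (m h2 div d)"
  shows "2 \<le> nbrs_in n d m W v"
proof -
  have "{h1, h2} \<subseteq> {h. h < d*n \<and> h div d = v \<and> W (m h div d)}" by (simp add: assms(2-7))
  from card_mono[OF fin_nb this] show ?thesis using assms(1) unfolding nbrs_in_def by simp
qed

lemma one_le:
  assumes "1 \<le> nbrs_in n d m W v"
  obtains h where "h < d*n" "h div d = v" "W (m h div d)"
proof -
  have "{h. h < d*n \<and> h div d = v \<and> W (m h div d)} \<noteq> {}"
    using assms unfolding nbrs_in_def by (metis card.empty not_one_le_zero)
  then show ?thesis using that by blast
qed

end

locale GH = G +
  fixes H :: "nat set"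
  assumes Habs: "absorbing n d m H"
begin

definition U where "U = {..<n} - H"

definition inU where "inU e \<longleftrightarrow> e < d*n \<and> e div d \<in> U \<and> m e div d \<in> U"

definition nbw :: "nat \<Rightarrow> nat list \<Rightarrow> bool" where
  "nbw u es \<longleftrightarrow> (\<forall>e\<in>set es. inU e) \<and> (es \<noteq> [] \<longrightarrow> hd es div d = u) \<and>
     (\<forall>i. Suc i < length es \<longrightarrow> es!(Suc i) div d = m (es!i) div d \<and> es!(Suc i) \<noteq> m (es!i))"

definition endv :: "nat \<Rightarrow> nat list \<Rightarrow> nat" where
  "endv u es = (if es = [] then u else m (last es) div d)"

definition verts :: "nat \<Rightarrow> nat list \<Rightarrow> nat set" where
  "verts u es = insert u ((\<lambda>e. m e div d) ` set es)"

definition strong :: "nat set \<Rightarrow> bool" where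
  "strong S \<longleftrightarrow> (\<forall>v\<in>S. 2 \<le> nbrs_in n d m (\<lambda>x. x \<in> S) v)"

lemma start_in_verts:
  assumes "nbw u es" "i < length es"
  shows "es!i div d \<in> verts u es"
proof (cases i)
  case 0
  then show ?thesis using assms by (auto simp: nbw_def verts_def hd_conv_nth)
next
  case (Suc j)
  then have "es!i div d = m (es!j) div d" using assms by (auto simp: nbw_def)
  then show ?thesis using assms Suc by (auto simp: verts_def)
qed

lemma nbw_inU: "nbw u es \<Longrightarrow> e \<in> set es \<Longrightarrow> inU e"
  by (auto simp: nbw_def)

lemma interior:
  assumes "nbw u es" "Suc i < length es" "verts u es \<subseteq> S"
  shows "2 \<le> nbrs_in n d m (\<lambda>x. x \<in> S) (m (es!i) div d)"
proof -
  have i: "i < length es" using assms by auto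
  have e1: "inU (es!i)" "inU (es!Suc i)" using assms i by (auto simp: nbw_def)
  show ?thesis
  proof (rule two_le[of "m (es!i)" "es!Suc i"])
    show "m (es!i) \<noteq> es!Suc i" using assms by (auto simp: nbw_def)
    show "m (es!i) < d*n" "es!Suc i < d*n" using e1 m_lt by (auto simp: inU_def)
    show "es!Suc i div d = m (es!i) div d" using assms by (auto simp: nbw_def)
    show "m (m (es!i)) div d \<in> S" using m_inv e1 start_in_verts[OF assms(1) i] assms(3)
      by (auto simp: inU_def)
    show "m (es!Suc i) div d \<in> S" using assms(2,3) by (auto simp: verts_def)
  qed auto
qed

lemma vert_cases:
  assumes "nbw u es" "v \<in> verts u es"
  shows "v = u \<or> v = endv u es \<or> (\<exists>i. Suc i < length es \<and> v = m (es!i) div d)"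
proof -
  { assume "v \<noteq> u"
    then obtain e where e: "e \<in> set es" "v = m e div d" using assms by (auto simp: verts_def)
    then obtain i where i: "i < length es" "e = es!i" by (auto simp: in_set_conv_nth)
    have ?thesis
    proof (cases "Suc i < length es")
      case False
      then have "i = length es - 1" using i by auto
      moreover have "es \<noteq> []" using i by auto
      ultimately have "e = last es" using i by (simp add: last_conv_nth)
      then show ?thesis using e i by (auto simp: endv_def)
    qed (use e i in auto) }
  then show ?thesis by blast
qed

lemma nbw_Nil[simp]: "nbw u []" by (simp add: nbw_def)

lemma nbw_Cons: "nbw u (e#es) \<longleftrightarrow> inU e \<and> e div d = u \<and> nbw (m e div d) es \<and> (es \<noteq> [] \<longrightarrow> hd es \<noteq> m e)"
proof
  assume a: "nbw u (e#es)"
  have "\<forall>i. Suc i < length es \<longrightarrow> es!(Suc i) div d = m (es!i) div d \<and> es!(Suc i) \<noteq> m (es!i)"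
  proof (intro allI impI)
    fix i assume "Suc i < length es"
    then show "es!(Suc i) div d = m (es!i) div d \<and> es!(Suc i) \<noteq> m (es!i)"
      using a unfolding nbw_def by (metis Suc_less_eq length_Cons nth_Cons_Suc)
  qed
  moreover have "es \<noteq> [] \<Longrightarrow> hd es div d = m e div d \<and> hd es \<noteq> m e"
    using a unfolding nbw_def by (metis hd_conv_nth length_Cons length_greater_0_conv nth_Cons_0 nth_Cons_Suc Suc_less_eq)
  ultimately show "inU e \<and> e div d = u \<and> nbw (m e div d) es \<and> (es \<noteq> [] \<longrightarrow> hd es \<noteq> m e)"
    using a unfolding nbw_def by auto
next
  assume a: "inU e \<and> e div d = u \<and> nbw (m e div d) es \<and> (es \<noteq> [] \<longrightarrow> hd es \<noteq> m e)"
  have "\<forall>i. Suc i < length (e#es) \<longrightarrow> (e#es)!(Suc i) div d = m ((e#es)!i) div d \<and> (e#es)!(Suc i) \<noteq> m ((e#es)!i)"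
  proof (intro allI impI)
    fix i assume i: "Suc i < length (e#es)"
    show "(e#es)!(Suc i) div d = m ((e#es)!i) div d \<and> (e#es)!(Suc i) \<noteq> m ((e#es)!i)"
    proof (cases i)
      case 0
      then show ?thesis using a i unfolding nbw_def by (auto simp: hd_conv_nth)
    next
      case (Suc j)
      then show ?thesis using a i unfolding nbw_def by auto
    qed
  qed
  then show "nbw u (e#es)" using a unfolding nbw_def by auto
qed

lemma endv_Cons: "endv u (e#es) = endv (m e div d) es"
  by (simp add: endv_def)

lemma verts_Cons: "e div d = u \<Longrightarrow> verts u (e#es) = insert u (verts (m e div d) es)"
  by (auto simp: verts_def)

lemma nbw_snoc: "nbw u (es@[f]) \<longleftrightarrow> nbw u es \<and> inU f \<and> f div d = endv u es \<and> (es \<noteq> [] \<longrightarrow> f \<noteq> m (last es))"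
proof (induction es arbitrary: u)
  case Nil
  then show ?case by (auto simp: nbw_Cons endv_def)
next
  case (Cons a es)
  show ?case
    by (auto simp: nbw_Cons Cons.IH endv_def hd_append)
qed

lemma verts_snoc: "verts u (es@[f]) = insert (m f div d) (verts u es)"
  by (auto simp: verts_def)

lemma endv_snoc: "endv u (es@[f]) = m f div d"
  by (simp add: endv_def)

lemma finite_verts: "finite (verts u es)" by (simp add: verts_def)

lemma card_verts: "card (verts u es) \<le> length es + 1"
proof -
  have "card (verts u es) \<le> Suc (card ((\<lambda>e. m e div d) ` set es))"
    unfolding verts_def by (simp add: card_insert_le_m1 card_insert_if)
  also have "card ((\<lambda>e. m e div d) ` set es) \<le> length es"
    by (metis card_image_le card_length finite_set le_trans)
  finally show ?thesis by simp
qed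

lemma verts_U: "nbw u es \<Longrightarrow> u \<in> U \<Longrightarrow> verts u es \<subseteq> U"
  by (auto simp: verts_def nbw_def inU_def)

lemma endv_in_verts: "endv u es \<in> verts u es"
  by (auto simp: endv_def verts_def)

lemma endv_nonempty: "es \<noteq> [] \<Longrightarrow> endv u es = m (last es) div d"
  by (simp add: endv_def)

lemma last_start: "nbw u es \<Longrightarrow> es \<noteq> [] \<Longrightarrow> last es div d \<in> verts u es"
  using start_in_verts[of u es "length es - 1"] by (simp add: last_conv_nth)

lemma inU_lt: "inU e \<Longrightarrow> e < d*n" by (simp add: inU_def)

lemma decomp3:
  assumes "2 \<le> length q"
  obtains e r f where "q = e # r @ [f]"
proof -
  obtain e t where q: "q = e # t" using assms by (cases q) auto
  then have "t \<noteq> []" using assms by auto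
  then have "t = butlast t @ [last t]" by simp
  then show ?thesis using that q by metis
qed

lemma closed_walk:
  assumes "nbw u q" "q \<noteq> []" "endv u q = u"
  shows "\<exists>S \<subseteq> verts u q. S \<noteq> {} \<and> strong S"
  using assms
proof (induction "length q" arbitrary: u q rule: less_induct)
  case less
  note nb = less.prems(1)
  have hdu: "hd q div d = u" using less.prems by (simp add: nbw_def)
  have hdU: "inU (hd q)" "inU (last q)" using less.prems by (auto simp: nbw_def)
  show ?case
  proof (cases "hd q = m (last q)")
    case False
    have "strong (verts u q)" unfolding strong_def
    proof
      fix v assume v: "v \<in> verts u q"
      from vert_cases[OF nb v] consider "v = u" | "v = endv u q" | "\<exists>i. Suc i < length q \<and> v = m (q!i) div d"
        by blast
      then show "2 \<le> nbrs_in n d m (\<lambda>x. x \<in> verts u q) v"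
      proof cases
        case 3
        then show ?thesis using interior[OF nb] by blast
      next
        case c: 1
        show ?thesis
        proof (rule two_le[of "hd q" "m (last q)"])
          show "hd q < d*n" "m (last q) < d*n" using hdU m_lt inU_lt by auto
          show "hd q div d = v" using hdu c by simp
          show "m (last q) div d = v" using less.prems c by (simp add: endv_def)
          show "m (hd q) div d \<in> verts u q" using less.prems by (auto simp: verts_def)
          show "m (m (last q)) div d \<in> verts u q" using m_inv hdU inU_lt last_start[OF nb less.prems(2)] by simp
        qed (use False in auto)
      next
        case c: 2
        then have c': "v = u" using less.prems by simp
        show ?thesis
        proof (rule two_le[of "hd q" "m (last q)"])
          show "hd q < d*n" "m (last q) < d*n" using hdU m_lt inU_lt by auto
          show "hd q div d = v" using hdu c' by simp
          show "m (last q) div d = v" using less.prems c' by (simp add: endv_def)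
          show "m (hd q) div d \<in> verts u q" using less.prems by (auto simp: verts_def)
          show "m (m (last q)) div d \<in> verts u q" using m_inv hdU inU_lt last_start[OF nb less.prems(2)] by simp
        qed (use False in auto)
      qed
    qed
    then show ?thesis using endv_in_verts by blast
  next
    case True
    have l1: "length q \<noteq> 1"
    proof
      assume "length q = 1"
      then obtain e where "q = [e]" by (metis One_nat_def length_0_conv length_Suc_conv)
      then show False using True m_ne hdU inU_lt
        by (metis last.simps list.sel(1) m_inv)
    qed
    have l2: "length q \<noteq> 2"
    proof
      assume "length q = 2"
      then obtain e1 e2 where q: "q = [e1, e2]"
        by (metis One_nat_def Suc_1 length_0_conv length_Suc_conv)
      then have "e2 \<noteq> m e1" using nb by (simp add: nbw_Cons)
      moreover have "e1 = m e2" using True q by simp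
      ultimately show False using m_inv hdU inU_lt q by auto
    qed
    have "2 \<le> length q" using less.prems(2) l1 by (cases q) (auto simp: Suc_le_eq)
    then obtain e r f where q: "q = e # r @ [f]" by (rule decomp3)
    have rne: "r \<noteq> []" using l2 q by auto
    define u' where "u' = m e div d"
    have nb': "nbw u' (r @ [f])" using nb q by (simp add: nbw_Cons u'_def)
    then have nbr: "nbw u' r" and fdiv: "f div d = endv u' r" by (auto simp: nbw_snoc)
    have ef: "e = m f" using True q by simp
    have "inU f" using nb' by (simp add: nbw_snoc)
    then have "m e = f" using ef m_inv inU_lt by simp
    then have "endv u' r = u'" using fdiv by (simp add: u'_def)
    moreover have "length r < length q" using q by simp
    ultimately obtain S where S: "S \<subseteq> verts u' r" "S \<noteq> {}" "strong S"
      using less.hyps[OF _ nbr rne] by blast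
    have "verts u' r \<subseteq> verts u q" using q by (auto simp: verts_def u'_def)
    then show ?thesis using S by blast
  qed
qed

lemma two_walks:
  assumes "nbw u p" "nbw u q" "endv u p = endv u q" "p \<noteq> q"
  shows "\<exists>S \<subseteq> verts u p \<union> verts u q. S \<noteq> {} \<and> strong S"
  using assms
proof (induction "length p + length q" arbitrary: u p q rule: less_induct)
  case less
  note nbp = less.prems(1) and nbq = less.prems(2)
  show ?case
  proof (cases "p = [] \<or> q = []")
    case True
    then show ?thesis
    proof
      assume p: "p = []"
      then have "q \<noteq> []" "endv u q = u" using less.prems by (auto simp: endv_def)
      then show ?thesis using closed_walk[OF nbq] by blast
    next
      assume q: "q = []"
      then have "p \<noteq> []" "endv u p = u" using less.prems by (auto simp: endv_def)
      then show ?thesis using closed_walk[OF nbp] by blast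
    qed
  next
    case False
    then obtain a p' b q' where p: "p = a # p'" and q: "q = b # q'" by (cases p; cases q) auto
    show ?thesis
    proof (cases "a = b")
      case True
      define u' where "u' = m a div d"
      have h1: "nbw u' p'" "nbw u' q'" using nbp nbq p q True by (auto simp: nbw_Cons u'_def)
      have h2: "endv u' p' = endv u' q'" using less.prems(3) p q True by (simp add: endv_Cons u'_def)
      have h3: "p' \<noteq> q'" using less.prems(4) p q True by simp
      have h4: "length p' + length q' < length p + length q" using p q by simp
      obtain S where S: "S \<subseteq> verts u' p' \<union> verts u' q'" "S \<noteq> {}" "strong S"
        using less.hyps[OF h4 h1 h2 h3] by blast
      have "verts u' p' \<subseteq> verts u p" "verts u' q' \<subseteq> verts u q"
        using p q True by (auto simp: verts_def u'_def)
      then show ?thesis using S by blast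
    next
      case ab: False
      show ?thesis
      proof (cases "last p = last q")
        case True
        have "p \<noteq> []" "q \<noteq> []" using p q by auto
        define p1 x q1 y where "p1 = butlast p" "x = last p" "q1 = butlast q" "y = last q"
        have p1: "p = p1 @ [x]" and q1: "q = q1 @ [y]" using \<open>p \<noteq> []\<close> \<open>q \<noteq> []\<close>
          by (simp_all add: p1_x_q1_y_def)
        have xy: "x = y" using True p1 q1 by simp
        have h1: "nbw u p1" "nbw u q1" using nbp nbq p1 q1 by (auto simp: nbw_snoc)
        have h2: "endv u p1 = endv u q1" using nbp nbq p1 q1 xy by (auto simp: nbw_snoc)
        have h3: "p1 \<noteq> q1" using less.prems(4) p1 q1 xy by simp
        have h4: "length p1 + length q1 < length p + length q" using p1 q1 by simp
        obtain S where S: "S \<subseteq> verts u p1 \<union> verts u q1" "S \<noteq> {}" "strong S"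
          using less.hyps[OF h4 h1 h2 h3] by blast
        have "verts u p1 \<subseteq> verts u p" "verts u q1 \<subseteq> verts u q"
          using p1 q1 by (auto simp: verts_snoc)
        then show ?thesis using S by blast
      next
        case lpq: False
        define S where "S = verts u p \<union> verts u q"
        have pne: "p \<noteq> []" and qne: "q \<noteq> []" using p q by auto
        have au: "a div d = u" "b div d = u" using nbp nbq unfolding p q nbw_Cons by simp_all
        have aU: "inU a" "inU b" "inU (last p)" "inU (last q)"
          using nbw_inU[OF nbp] nbw_inU[OF nbq] p q pne qne by (simp_all add: last_in_set)
        have cu: "2 \<le> nbrs_in n d m (\<lambda>x. x \<in> S) u"
        proof (rule two_le[of a b])
          show "a < d*n" "b < d*n" using aU inU_lt by auto
          show "m a div d \<in> S" "m b div d \<in> S" using p q by (auto simp: S_def verts_def)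
        qed (use ab au in auto)
        have cw: "2 \<le> nbrs_in n d m (\<lambda>x. x \<in> S) (endv u p)"
        proof (rule two_le[of "m (last p)" "m (last q)"])
          show "m (last p) < d*n" "m (last q) < d*n" using aU inU_lt m_lt by auto
          show "m (last p) \<noteq> m (last q)" using lpq m_inj aU inU_lt by blast
          show "m (last p) div d = endv u p" using pne by (simp add: endv_def)
          show "m (last q) div d = endv u p" using qne less.prems(3) by (simp add: endv_def)
          show "m (m (last p)) div d \<in> S" using m_inv aU inU_lt last_start[OF nbp pne] by (simp add: S_def)
          show "m (m (last q)) div d \<in> S" using m_inv aU inU_lt last_start[OF nbq qne] by (simp add: S_def)
        qed
        have sp: "verts u p \<subseteq> S" "verts u q \<subseteq> S" by (auto simp: S_def)
        have "strong S" unfolding strong_def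
        proof
          fix v assume "v \<in> S"
          then consider "v \<in> verts u p" | "v \<in> verts u q" by (auto simp: S_def)
          then show "2 \<le> nbrs_in n d m (\<lambda>x. x \<in> S) v"
          proof cases
            case 1
            from vert_cases[OF nbp this] consider "v = u" | "v = endv u p" | i where "Suc i < length p" "v = m (p!i) div d"
              by blast
            then show ?thesis
            proof cases
              case 3 then show ?thesis using interior[OF nbp 3(1) sp(1)] by simp
            qed (use cu cw in simp_all)
          next
            case 2
            from vert_cases[OF nbq this] consider "v = u" | "v = endv u q" | i where "Suc i < length q" "v = m (q!i) div d"
              by blast
            then show ?thesis
            proof cases
              case 3 then show ?thesis using interior[OF nbq 3(1) sp(2)] by simp
            qed (use cu cw less.prems(3) in simp_all)
          qed
        qed
        moreover have "u \<in> S" by (simp add: S_def verts_def)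
        ultimately show ?thesis by (intro exI[of _ S]) (auto simp: S_def)
      qed
    qed
  qed
qed

definition nbH where "nbH v = nbrs_in n d m (\<lambda>x. x \<in> H) v"

definition good where
  "good S \<longleftrightarrow> S \<subseteq> U \<and> S \<noteq> {} \<and> (\<forall>v\<in>S. 2 \<le> nbrs_in n d m (\<lambda>x. x \<in> H \<or> x \<in> S) v)"

lemma H_sub: "H \<subseteq> {..<n}" using Habs by (simp add: absorbing_def)

lemma U_lt: "v \<in> U \<Longrightarrow> v < n" by (simp add: U_def)
lemma U_H: "v \<in> U \<Longrightarrow> v \<notin> H" by (simp add: U_def)

lemma strong_good: "S \<subseteq> U \<Longrightarrow> S \<noteq> {} \<Longrightarrow> strong S \<Longrightarrow> good S"
  unfolding good_def strong_def using nbrs_mono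
  by (metis (no_types, lifting) order_trans)

lemma deg_U: "v \<in> U \<Longrightarrow> card {f. inU f \<and> f div d = v} = d - nbH v"
proof -
  assume v: "v \<in> U"
  have "nbH v + nbrs_in n d m (\<lambda>x. x \<notin> H) v = d" unfolding nbH_def
    by (rule nbrs_split[OF U_lt[OF v]])
  moreover have "{h. h < d*n \<and> h div d = v \<and> m h div d \<notin> H} = {f. inU f \<and> f div d = v}"
    using v part_lt by (auto simp: inU_def U_def)
  ultimately show ?thesis unfolding nbrs_in_def by simp
qed

lemma fin_inU: "finite {f. inU f \<and> P f}"
  by (rule finite_subset[of _ "{..<d*n}"]) (auto simp: inU_def)

lemma defpath:
  assumes nb: "nbw u es" and ne: "es \<noteq> []" and u: "u \<in> U"
    and h1: "1 \<le> nbH u" and h2: "1 \<le> nbH (endv u es)"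
  shows "good (verts u es)"
proof -
  have sub: "verts u es \<subseteq> U" by (rule verts_U[OF nb u])
  have hdU: "inU (hd es)" "inU (last es)" using nbw_inU[OF nb] ne by simp_all
  have hdu: "hd es div d = u" using nb ne by (simp add: nbw_def)
  obtain h where h: "h < d*n" "h div d = u" "m h div d \<in> H" using h1 unfolding nbH_def by (rule one_le)
  obtain h' where h': "h' < d*n" "h' div d = endv u es" "m h' div d \<in> H" using h2 unfolding nbH_def by (rule one_le)
  have cu: "2 \<le> nbrs_in n d m (\<lambda>x. x \<in> H \<or> x \<in> verts u es) u"
  proof (rule two_le[of "hd es" h])
    show "hd es \<noteq> h" using hdU h(3) U_H by (auto simp: inU_def)
    show "hd es < d*n" using hdU inU_lt by simp
    show "m (hd es) div d \<in> H \<or> m (hd es) div d \<in> verts u es" using ne by (simp add: verts_def)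
  qed (use h hdu in simp_all)
  have cw: "2 \<le> nbrs_in n d m (\<lambda>x. x \<in> H \<or> x \<in> verts u es) (endv u es)"
  proof (rule two_le[of "m (last es)" h'])
    have "m (m (last es)) div d \<in> U" using hdU m_inv by (simp add: inU_def)
    then show "m (last es) \<noteq> h'" using h'(3) U_H by auto
    show "m (last es) < d*n" using hdU inU_lt m_lt by simp
    show "m (last es) div d = endv u es" using ne by (simp add: endv_def)
    show "m (m (last es)) div d \<in> H \<or> m (m (last es)) div d \<in> verts u es"
      using m_inv hdU inU_lt last_start[OF nb ne] by simp
  qed (use h' in simp_all)
  have "\<forall>v\<in>verts u es. 2 \<le> nbrs_in n d m (\<lambda>x. x \<in> H \<or> x \<in> verts u es) v"
  proof
    fix v assume "v \<in> verts u es"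
    from vert_cases[OF nb this] consider "v = u" | "v = endv u es" | i where "Suc i < length es" "v = m (es!i) div d"
      by blast
    then show "2 \<le> nbrs_in n d m (\<lambda>x. x \<in> H \<or> x \<in> verts u es) v"
    proof cases
      case 3
      have "2 \<le> nbrs_in n d m (\<lambda>x. x \<in> verts u es) v" using interior[OF nb 3(1)] 3(2) by simp
      then show ?thesis using nbrs_mono[of "\<lambda>x. x \<in> verts u es" "\<lambda>x. x \<in> H \<or> x \<in> verts u es" v] by simp
    qed (use cu cw in simp_all)
  qed
  moreover have "u \<in> verts u es" by (simp add: verts_def)
  ultimately show ?thesis using sub unfolding good_def by blast
qed

definition ext where
  "ext u es = {f. inU f \<and> f div d = endv u es \<and> (es \<noteq> [] \<longrightarrow> f \<noteq> m (last es))}"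

definition Wk where "Wk u r = {es. nbw u es \<and> length es = r}"

lemma fin_Wk: "finite (Wk u r)"
proof -
  have "Wk u r \<subseteq> {es. set es \<subseteq> {..<d*n} \<and> length es = r}"
    by (auto simp: Wk_def nbw_def inU_def)
  then show ?thesis using finite_lists_length_eq[of "{..<d*n}" r] finite_subset by blast
qed

lemma Wk_Suc: "Wk u (Suc r) = (\<lambda>(es, f). es @ [f]) ` (SIGMA es:Wk u r. ext u es)"
proof (rule set_eqI)
  fix xs
  show "xs \<in> Wk u (Suc r) \<longleftrightarrow> xs \<in> (\<lambda>(es, f). es @ [f]) ` (SIGMA es:Wk u r. ext u es)"
  proof
    assume a: "xs \<in> Wk u (Suc r)"
    then have "xs \<noteq> []" by (auto simp: Wk_def)
    then have xs: "xs = butlast xs @ [last xs]" by simp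
    have "nbw u (butlast xs @ [last xs])" using a xs by (simp add: Wk_def)
    then have "butlast xs \<in> Wk u r" "last xs \<in> ext u (butlast xs)"
      using a by (auto simp: Wk_def ext_def nbw_snoc)
    then show "xs \<in> (\<lambda>(es, f). es @ [f]) ` (SIGMA es:Wk u r. ext u es)"
      using xs by (intro image_eqI[of _ _ "(butlast xs, last xs)"]) auto
  next
    assume "xs \<in> (\<lambda>(es, f). es @ [f]) ` (SIGMA es:Wk u r. ext u es)"
    then obtain es f where "xs = es @ [f]" "es \<in> Wk u r" "f \<in> ext u es" by auto
    then show "xs \<in> Wk u (Suc r)" by (auto simp: Wk_def ext_def nbw_snoc)
  qed
qed

lemma card_Wk_Suc: "card (Wk u (Suc r)) = (\<Sum>es\<in>Wk u r. card (ext u es))"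
proof -
  have "inj_on (\<lambda>(es, f). es @ [f]) (SIGMA es:Wk u r. ext u es)"
    by (auto simp: inj_on_def)
  moreover have "finite (ext u es)" for es unfolding ext_def by (rule fin_inU)
  ultimately show ?thesis unfolding Wk_Suc
    by (simp add: card_image card_SigmaI fin_Wk)
qed

lemma card_ext:
  assumes nb: "nbw u es" and u: "u \<in> U"
  shows "card (ext u es) + (if es = [] then 0 else 1) = d - nbH (endv u es)"
proof (cases "es = []")
  case True
  then show ?thesis using deg_U[OF u] by (simp add: ext_def endv_def)
next
  case False
  have ev: "endv u es \<in> U" using verts_U[OF nb u] endv_in_verts by blast
  have lU: "inU (last es)" using nbw_inU[OF nb] False by simp
  have ed: "m (last es) div d = endv u es" using False by (simp add: endv_def)
  have lt: "last es < d*n" using lU by (simp add: inU_def)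
  have "inU (m (last es))" unfolding inU_def
    using m_lt[OF lt] m_inv[OF lt] ed ev lU by (simp add: inU_def)
  then have mem: "m (last es) \<in> {f. inU f \<and> f div d = endv u es}" using ed by simp
  have "ext u es = {f. inU f \<and> f div d = endv u es} - {m (last es)}"
    using False by (auto simp: ext_def)
  then have "card (ext u es) = card {f. inU f \<and> f div d = endv u es} - 1"
    using mem fin_inU by (simp add: card_Diff_singleton)
  moreover have "card {f. inU f \<and> f div d = endv u es} \<ge> 1"
  proof -
    have "{f. inU f \<and> f div d = endv u es} \<noteq> {}" using mem by blast
    then have "0 < card {f. inU f \<and> f div d = endv u es}" using fin_inU by (simp add: card_gt_0_iff)
    then show ?thesis by simp
  qed
  ultimately show ?thesis using deg_U[OF ev] False by simp
qed

lemma count_walks: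
  assumes u0: "u0 \<in> U" and le1: "\<forall>v\<in>U. nbH v \<le> 1"
    and Q: "\<forall>es. nbw u0 es \<and> 1 \<le> length es \<and> length es \<le> R \<longrightarrow> nbH (endv u0 es) = 0"
  shows "r \<le> R \<Longrightarrow> 2^r \<le> card (Wk u0 r)"
proof (induction r)
  case 0
  have "Wk u0 0 = {[]}" by (auto simp: Wk_def)
  then show ?case by simp
next
  case (Suc r)
  have "\<forall>es\<in>Wk u0 r. 2 \<le> card (ext u0 es)"
  proof
    fix es assume es: "es \<in> Wk u0 r"
    then have nb: "nbw u0 es" and len: "length es = r" by (auto simp: Wk_def)
    have c: "card (ext u0 es) + (if es = [] then 0 else 1) = d - nbH (endv u0 es)"
      by (rule card_ext[OF nb u0])
    show "2 \<le> card (ext u0 es)"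
    proof (cases "es = []")
      case True
      have "nbH u0 \<le> 1" using le1 u0 by blast
      then show ?thesis using c True d3 by (simp add: endv_def)
    next
      case False
      then have "1 \<le> length es" by (cases es) auto
      then have "nbH (endv u0 es) = 0" using Q nb len Suc.prems by simp
      then show ?thesis using c False d3 by simp
    qed
  qed
  then have "(\<Sum>es\<in>Wk u0 r. 2) \<le> card (Wk u0 (Suc r))"
    unfolding card_Wk_Suc by (intro sum_mono) auto
  then show ?case using Suc by simp
qed

lemma grow:
  assumes Une: "U \<noteq> {}" and nR: "n < 2^R"
  shows "\<exists>S. good S \<and> card S \<le> 2*R+2"
proof (cases "\<exists>v\<in>U. 2 \<le> nbH v")
  case True
  then obtain v where v: "v \<in> U" "2 \<le> nbH v" by blast
  have "nbH v \<le> nbrs_in n d m (\<lambda>x. x \<in> H \<or> x \<in> {v}) v"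
    unfolding nbH_def by (rule nbrs_mono) simp
  then have "good {v}" using v unfolding good_def by simp
  then show ?thesis by (intro exI[of _ "{v}"]) simp
next
  case False
  then have le1: "\<forall>v\<in>U. nbH v \<le> 1" by auto
  obtain u0 where u0: "u0 \<in> U" and pick: "(\<exists>v\<in>U. nbH v = 1) \<longrightarrow> nbH u0 = 1"
  proof (cases "\<exists>v\<in>U. nbH v = 1")
    case True
    then obtain v where "v \<in> U" "nbH v = 1" by blast
    then show ?thesis using that by blast
  next
    case False
    obtain v where "v \<in> U" using Une by blast
    then show ?thesis using that False by blast
  qed
  show ?thesis
  proof (cases "\<exists>es. nbw u0 es \<and> 1 \<le> length es \<and> length es \<le> R \<and> nbH (endv u0 es) \<noteq> 0")
    case True
    then obtain es where es: "nbw u0 es" "1 \<le> length es" "length es \<le> R" "nbH (endv u0 es) \<noteq> 0"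
      by blast
    have ev: "endv u0 es \<in> U" using verts_U[OF es(1) u0] endv_in_verts by blast
    then have "nbH (endv u0 es) = 1" using le1 es(4) by fastforce
    then have "nbH u0 = 1" using pick ev by blast
    moreover have "es \<noteq> []" using es(2) by auto
    ultimately have "good (verts u0 es)" using defpath[OF es(1) _ u0] \<open>nbH (endv u0 es) = 1\<close> by simp
    moreover have "card (verts u0 es) \<le> 2*R+2" using card_verts[of u0 es] es(3) by simp
    ultimately show ?thesis by blast
  next
    case False
    then have Q: "\<forall>es. nbw u0 es \<and> 1 \<le> length es \<and> length es \<le> R \<longrightarrow> nbH (endv u0 es) = 0"
      by blast
    have big: "2^R \<le> card (Wk u0 R)" by (rule count_walks[OF u0 le1 Q]) simp
    show ?thesis
    proof (cases "inj_on (endv u0) (Wk u0 R)")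
      case True
      have "endv u0 ` Wk u0 R \<subseteq> U"
        using verts_U[OF _ u0] endv_in_verts by (auto simp: Wk_def)
      moreover have "finite U" by (simp add: U_def)
      ultimately have "card (endv u0 ` Wk u0 R) \<le> card U" by (simp add: card_mono)
      moreover have "card U \<le> n" unfolding U_def
        by (metis card_Diff_subset_Int card_lessThan diff_le_self finite_Int finite_lessThan)
      ultimately have "card (Wk u0 R) \<le> n" using card_image[OF True] by simp
      then show ?thesis using big nR by simp
    next
      case False
      then obtain p q where pq: "p \<in> Wk u0 R" "q \<in> Wk u0 R" "p \<noteq> q" "endv u0 p = endv u0 q"
        unfolding inj_on_def by blast
      have nb: "nbw u0 p" "nbw u0 q" "length p = R" "length q = R" using pq by (auto simp: Wk_def)
      obtain S where S: "S \<subseteq> verts u0 p \<union> verts u0 q" "S \<noteq> {}" "strong S"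
        using two_walks[OF nb(1,2) pq(4,3)] by blast
      have "S \<subseteq> U" using S(1) verts_U[OF nb(1) u0] verts_U[OF nb(2) u0] by blast
      then have "good S" using strong_good S by simp
      moreover have "card S \<le> 2*R+2"
      proof -
        have "card S \<le> card (verts u0 p \<union> verts u0 q)"
          using S(1) by (intro card_mono) (simp_all add: finite_verts)
        also have "\<dots> \<le> card (verts u0 p) + card (verts u0 q)" by (rule card_Un_le)
        also have "\<dots> \<le> 2*R+2" using card_verts[of u0 p] card_verts[of u0 q] nb by simp
        finally show ?thesis .
      qed
      ultimately show ?thesis by blast
    qed
  qed
qed

end


lemma R_pow: assumes "1 \<le> (n::nat)" shows "n < 2 ^ (nat \<lceil>log 2 n\<rceil> + 1)"
proof -
  have lg0: "0 \<le> log 2 n" using assms by simp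
  then have e: "real (nat \<lceil>log 2 n\<rceil>) = real_of_int \<lceil>log 2 n\<rceil>" by (simp add: of_nat_nat)
  have "real n = 2 powr (log 2 n)" using assms by simp
  also have "\<dots> \<le> 2 powr (nat \<lceil>log 2 n\<rceil>)"
    by (intro powr_mono) (auto simp: e le_of_int_ceiling)
  also have "\<dots> = 2 ^ (nat \<lceil>log 2 n\<rceil>)" by (simp add: powr_realpow)
  finally have X: "real n \<le> 2 ^ (nat \<lceil>log 2 n\<rceil>)" .
  have "(2::real) ^ (nat \<lceil>log 2 n\<rceil> + 1) = 2 * 2 ^ (nat \<lceil>log 2 n\<rceil>)" by simp
  moreover have "0 < real n" using assms by simp
  ultimately have "real n < 2 ^ (nat \<lceil>log 2 n\<rceil> + 1)" using X by linarith
  then have "real n < real ((2::nat) ^ (nat \<lceil>log 2 n\<rceil> + 1))" by simp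
  then show ?thesis by (simp only: of_nat_less_iff)
qed

lemma a_lower:
  fixes p :: real
  assumes p0: "0 < p" and p1: "p < 1" and n: "1 \<le> (n::nat)"
  shows "(1-p)^6 * real n powr (2 * ln (1-p) / ln 2) \<le> (1-p) ^ (2 * (nat \<lceil>log 2 n\<rceil> + 1) + 2)"
proof -
  define b where "b = 1 - p"
  have b0: "0 < b" and b1: "b < 1" using p0 p1 by (auto simp: b_def)
  have lb: "ln b < 0" using b0 b1 by simp
  define R where "R = nat \<lceil>log 2 n\<rceil>"
  have lg0: "0 \<le> log 2 n" using n by simp
  have R1: "real R \<le> log 2 n + 1" unfolding R_def using lg0
    by (simp add: of_nat_nat)
  define N where "N = 2 * (R + 1) + 2"
  have "b ^ N = b powr (real N)" using b0 by (simp add: powr_realpow)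
  also have "\<dots> = exp (real N * ln b)" using b0 by (simp add: powr_def mult.commute)
  finally have "b ^ (2 * (R + 1) + 2) = exp (real (2 * (R + 1) + 2) * ln b)" unfolding N_def .
  also have "\<dots> \<ge> exp ((6 + 2 * log 2 n) * ln b)"
  proof -
    have "real (2 * (R + 1) + 2) \<le> 6 + 2 * log 2 n" using R1 by simp
    then have "(6 + 2 * log 2 n) * ln b \<le> real (2 * (R + 1) + 2) * ln b"
      using lb by (intro mult_right_mono_neg) auto
    then show ?thesis by simp
  qed
  also have "exp ((6 + 2 * log 2 n) * ln b) = b^6 * real n powr (2 * ln b / ln 2)"
  proof -
    have "exp ((6 + 2 * log 2 n) * ln b) = exp (6 * ln b) * exp (ln n * (2 * ln b / ln 2))"
      by (simp add: log_def exp_add[symmetric] algebra_simps)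
    also have "exp (6 * ln b) = b^6"
    proof -
      have "exp (6 * ln b) = b powr 6" using b0 by (simp add: powr_def)
      also have "\<dots> = b^6" using b0 powr_realpow[of b 6] by simp
      finally show ?thesis .
    qed
    also have "exp (ln n * (2 * ln b / ln 2)) = real n powr (2 * ln b / ln 2)"
      using n by (simp add: powr_def)
    finally show ?thesis .
  qed
  finally show ?thesis unfolding b_def R_def .
qed

lemma final_real:
  fixes p :: real
  assumes p0: "0 < p" and p1: "p < 1" and n: "1 \<le> (n::nat)"
  shows "(1 - (1-p)^(2*(nat \<lceil>log 2 n\<rceil> + 1)+2)/2) ^ nat \<lceil>real n powr (2 - 2 * ln (1-p) / ln 2)\<rceil> * 2^n
     \<le> 2^n * exp (-((1-p)^6/2) * real n^2)"
proof -
  define C where "C = 2 - 2 * ln (1-p) / ln 2"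
  define c where "c = 2 * ln (1-p) / ln 2"
  define a where "a = (1-p)^(2*(nat \<lceil>log 2 n\<rceil> + 1)+2)"
  define T where "T = nat \<lceil>real n powr C\<rceil>"
  have low: "(1-p)^6 * real n powr c \<le> a" unfolding a_def c_def by (rule a_lower[OF p0 p1 n])
  have a0: "0 \<le> a" unfolding a_def using p1 by simp
  have a1: "a \<le> 1" unfolding a_def using p0 p1 by (intro power_le_one) auto
  have x0: "0 \<le> real n powr C" by simp
  then have e: "real T = real_of_int \<lceil>real n powr C\<rceil>" unfolding T_def by (simp add: of_nat_nat)
  have TC: "real n powr C \<le> real T" unfolding e by (rule le_of_int_ceiling)
  have "(1 - a/2) ^ T \<le> exp (-a/2) ^ T"
    using a1 by (intro power_mono) (auto simp: exp_ge_add_one_self[of "-a/2", simplified])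
  also have "\<dots> = exp (real T * (-a/2))" by (rule exp_of_nat_mult[symmetric])
  also have "\<dots> \<le> exp (-((1-p)^6/2) * real n^2)"
  proof -
    have "(1-p)^6 * real n powr c * real n powr C \<le> a * real T"
      using low TC a0 by (intro mult_mono) auto
    moreover have "real n powr c * real n powr C = real n ^ 2"
    proof -
      have "real n powr c * real n powr C = real n powr (c + C)" by (simp add: powr_add)
      also have "c + C = 2" unfolding c_def C_def by simp
      also have "real n powr 2 = real n ^ 2" using n powr_realpow[of "real n" 2] by simp
      finally show ?thesis .
    qed
    ultimately have "(1-p)^6 * real n ^ 2 \<le> a * real T" by (simp add: mult.assoc)
    then show ?thesis by (simp add: mult.commute)
  qed
  finally have "(1 - a/2) ^ T \<le> exp (-((1-p)^6/2) * real n^2)" .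
  then show ?thesis unfolding a_def T_def C_def by (simp add: mult.commute)
qed



locale GP = G n "Suc \<theta>" m for n \<theta> m +
  fixes p :: real
  assumes p0: "0 < p" and p1: "p < 1"
begin

abbreviation "dd \<equiv> Suc \<theta>"

definition step where "step X = cp_step n dd m \<theta> p X"

definition Aset :: "(nat \<Rightarrow> bool) \<Rightarrow> nat set" where
  "Aset X = \<Union>{S. S \<subseteq> {v. v < n \<and> \<not> X v} \<and> absorbing n dd m S}"

lemma theta2: "2 \<le> \<theta>" using d3 by simp

lemma Aset_sub: "Aset X \<subseteq> {v. v < n \<and> \<not> X v}" by (auto simp: Aset_def)

lemma Aset_fin: "finite (Aset X)"
  by (rule finite_subset[of _ "{..<n}"]) (use Aset_sub in auto)

lemma Aset_max: "S \<subseteq> {v. v < n \<and> \<not> X v} \<Longrightarrow> absorbing n dd m S \<Longrightarrow> S \<subseteq> Aset X"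
  by (auto simp: Aset_def)

lemma Aset_abs: "absorbing n dd m (Aset X)"
  unfolding absorbing_def
proof (intro conjI ballI)
  show "Aset X \<subseteq> {..<n}" using Aset_sub by auto
  fix v assume "v \<in> Aset X"
  then obtain S where S0: "S \<in> {S. S \<subseteq> {v. v < n \<and> \<not> X v} \<and> absorbing n dd m S}" "v \<in> S"
    unfolding Aset_def by (rule UnionE)
  then have S: "v \<in> S" "S \<subseteq> {v. v < n \<and> \<not> X v}" "absorbing n dd m S" by simp_all
  have "S \<subseteq> Aset X" using S(2) S(3) by (rule Aset_max)
  then have "nbrs_in n dd m (\<lambda>x. x \<in> S) v \<le> nbrs_in n dd m (\<lambda>x. x \<in> Aset X) v"
    by (intro nbrs_mono) auto
  moreover have "2 \<le> nbrs_in n dd m (\<lambda>x. x \<in> S) v" using S unfolding absorbing_def by blast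
  ultimately show "2 \<le> nbrs_in n dd m (\<lambda>x. x \<in> Aset X) v" by simp
qed

lemma nbrs_zero: "(\<forall>v<n. \<not> X v) \<Longrightarrow> nbrs_in n dd m X v = 0"
  unfolding nbrs_in_def using part_lt by auto

lemma step_dead: assumes "\<forall>v<n. \<not> X v" shows "step X = return_pmf healthy"
proof -
  have "step X = Pi_pmf {..<n} False (\<lambda>v. return_pmf False)"
    unfolding step_def cp_step_def using nbrs_zero[OF assms] theta2
    by (intro Pi_pmf_cong) auto
  also have "\<dots> = return_pmf healthy" by (simp add: healthy_def)
  finally show ?thesis .
qed

lemma step_support:
  assumes "X' \<in> set_pmf (step X)" "v \<in> Aset X"
  shows "\<not> X' v"
proof -
  have v: "v < n" using assms(2) Aset_sub by auto
  have "nbrs_in n dd m (\<lambda>x. x \<in> Aset X) v + nbrs_in n dd m (\<lambda>x. x \<notin> Aset X) v = dd"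
    by (rule nbrs_split[OF v])
  moreover have "2 \<le> nbrs_in n dd m (\<lambda>x. x \<in> Aset X) v"
    using Aset_abs assms(2) unfolding absorbing_def by blast
  moreover have "nbrs_in n dd m X v \<le> nbrs_in n dd m (\<lambda>x. x \<notin> Aset X) v"
    using Aset_sub by (intro nbrs_mono) auto
  ultimately have lt: "\<not> \<theta> \<le> nbrs_in n dd m X v" by linarith
  define q where "q = (\<lambda>v. if \<theta> \<le> nbrs_in n dd m X v then bernoulli_pmf p else return_pmf False)"
  have "set_pmf (step X) \<subseteq> PiE_dflt {..<n} False (set_pmf \<circ> q)"
    unfolding step_def cp_step_def q_def[symmetric] by (rule set_Pi_pmf_subset') simp
  with assms(1) have "X' \<in> PiE_dflt {..<n} False (set_pmf \<circ> q)" by (rule subsetD[rotated])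
  then have "X' v \<in> set_pmf (q v)" using v unfolding PiE_dflt_def by simp
  moreover have "q v = return_pmf False" using lt by (simp add: q_def)
  ultimately show ?thesis by simp
qed

lemma prob_E:
  assumes S: "S \<subseteq> {..<n}"
  shows "(1 - p) ^ card S \<le> measure_pmf.prob (step X) {X'. \<forall>v\<in>S. \<not> X' v}"
proof -
  define q where "q = (\<lambda>v. if \<theta> \<le> nbrs_in n dd m X v then bernoulli_pmf p else return_pmf False)"
  define B where "B = (\<lambda>v. if v \<in> S then {False} else (UNIV :: bool set))"
  have "{X'. \<forall>v\<in>S. \<not> X' v} = Pi {..<n} B"
    using S by (auto simp: B_def Pi_def)
  then have "measure_pmf.prob (step X) {X'. \<forall>v\<in>S. \<not> X' v} = (\<Prod>x\<in>{..<n}. measure_pmf.prob (q x) (B x))"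
    unfolding step_def cp_step_def q_def[symmetric] by (simp add: measure_Pi_pmf_Pi)
  also have "\<dots> \<ge> (\<Prod>x\<in>{..<n}. if x \<in> S then 1 - p else 1)"
  proof (rule prod_mono)
    fix x assume "x \<in> {..<n}"
    have "1 - p \<le> measure_pmf.prob (q x) {False}"
      using p0 p1 by (auto simp: q_def measure_pmf_single)
    then show "0 \<le> (if x \<in> S then 1 - p else 1) \<and> (if x \<in> S then 1 - p else 1) \<le> measure_pmf.prob (q x) (B x)"
      using p1 by (auto simp: B_def)
  qed
  also have "(\<Prod>x\<in>{..<n}. if x \<in> S then 1 - p else 1) = (1 - p) ^ card S"
    using S by (simp add: prod.If_cases Int_absorb1)
  finally show ?thesis .
qed

definition Gp :: "(nat \<Rightarrow> bool) \<Rightarrow> ennreal" where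
  "Gp X = (if X = healthy then 0 else ennreal (2 ^ (n - card (Aset X))))"

lemma Aset_mono_step: "X' \<in> set_pmf (step X) \<Longrightarrow> Aset X \<subseteq> Aset X'"
proof -
  assume a: "X' \<in> set_pmf (step X)"
  have "Aset X \<subseteq> {v. v < n \<and> \<not> X' v}" using step_support[OF a] Aset_sub by blast
  then show ?thesis using Aset_abs by (rule Aset_max)
qed

lemma card_Aset: "card (Aset X) \<le> n"
proof -
  have "card (Aset X) \<le> card {..<n}" using Aset_sub by (intro card_mono) auto
  then show ?thesis by simp
qed

lemma pot_step:
  assumes nR: "n < 2^R"
  shows "(\<integral>\<^sup>+X'. Gp X' \<partial>measure_pmf (step X)) \<le> ennreal (1 - (1-p)^(2*R+2)/2) * Gp X"
proof (cases "\<forall>v<n. \<not> X v")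
  case True
  then show ?thesis by (simp add: step_dead Gp_def)
next
  case False
  then obtain v where v: "v < n" "X v" by blast
  define A where "A = Aset X"
  define k where "k = n - card A"
  have XH: "X \<noteq> healthy" using v by (auto simp: healthy_def)
  have vA: "v \<notin> A" using v Aset_sub unfolding A_def by blast
  interpret H: GH n dd m A unfolding A_def by unfold_locales (rule Aset_abs)
  have Une: "H.U \<noteq> {}" using v vA by (auto simp: H.U_def)
  obtain S where S: "H.good S" "card S \<le> 2*R+2" using H.grow[OF Une nR] by blast
  have SU: "S \<subseteq> {..<n} - A" "S \<noteq> {}" using S(1) by (auto simp: H.good_def H.U_def)
  have finA: "finite A" unfolding A_def by (rule Aset_fin)
  have cardA: "card A \<le> n" unfolding A_def by (rule card_Aset)
  have "card A < n"
  proof -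
    have "A \<subset> {..<n}" using Aset_sub vA v unfolding A_def by auto
    then show ?thesis by (metis card_lessThan finite_lessThan psubset_card_mono)
  qed
  then have k1: "1 \<le> k" unfolding k_def by simp
  define E where "E = {X'. \<forall>v\<in>S. \<not> X' v}"
  define a where "a = (1 - p) ^ (2*R+2)"
  define P where "P = measure_pmf.prob (step X) E"
  have aP: "a \<le> P"
  proof -
    have "a \<le> (1-p) ^ card S" unfolding a_def using S(2) p0 p1 by (intro power_decreasing) auto
    also have "\<dots> \<le> P" unfolding P_def E_def by (rule prob_E) (use SU in auto)
    finally show ?thesis .
  qed
  have P1: "P \<le> 1" unfolding P_def by simp
  have bound: "Gp X' \<le> ennreal (2^(k-1)) * indicator E X' + ennreal (2^k) * indicator (UNIV - E) X'"
    if X': "X' \<in> set_pmf (step X)" for X'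
  proof -
    have AA: "A \<subseteq> Aset X'" using Aset_mono_step[OF X'] unfolding A_def .
    have c1: "card A \<le> card (Aset X')" using AA Aset_fin by (rule card_mono[rotated])
    have g: "Gp X' \<le> ennreal (2 ^ (n - card (Aset X')))" by (simp add: Gp_def)
    show ?thesis
    proof (cases "X' \<in> E")
      case True
      have abs: "absorbing n dd m (A \<union> S)" unfolding absorbing_def
      proof (intro conjI ballI)
        show "A \<union> S \<subseteq> {..<n}" using SU Aset_sub unfolding A_def by auto
        fix w assume w: "w \<in> A \<union> S"
        then show "2 \<le> nbrs_in n dd m (\<lambda>x. x \<in> A \<union> S) w"
        proof
          assume "w \<in> A"
          then have "2 \<le> nbrs_in n dd m (\<lambda>x. x \<in> A) w" using H.Habs by (simp add: absorbing_def)
          also have "\<dots> \<le> nbrs_in n dd m (\<lambda>x. x \<in> A \<union> S) w" by (intro nbrs_mono) auto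
          finally show ?thesis .
        next
          assume "w \<in> S"
          then show ?thesis using S(1) by (simp add: H.good_def)
        qed
      qed
      moreover have "A \<union> S \<subseteq> {v. v < n \<and> \<not> X' v}"
        using step_support[OF X'] Aset_sub SU True unfolding A_def E_def by auto
      ultimately have "A \<union> S \<subseteq> Aset X'" by (intro Aset_max)
      then have "card (A \<union> S) \<le> card (Aset X')" using Aset_fin by (rule card_mono[rotated])
      moreover have "card (A \<union> S) = card A + card S"
        using SU finA by (intro card_Un_disjoint) (auto intro: finite_subset[of S "{..<n}"])
      moreover have "1 \<le> card S" using SU by (metis card_0_eq finite_Diff finite_lessThan finite_subset
          less_one not_le)
      ultimately have "n - card (Aset X') \<le> k - 1" unfolding k_def by linarith
      then have "(2::real) ^ (n - card (Aset X')) \<le> 2 ^ (k - 1)" by (intro power_increasing) auto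
      then have "Gp X' \<le> ennreal (2^(k-1))" using g by (meson ennreal_leI order_trans)
      then show ?thesis using True by simp
    next
      case False
      have "n - card (Aset X') \<le> k" unfolding k_def using c1 by linarith
      then have "(2::real) ^ (n - card (Aset X')) \<le> 2 ^ k" by (intro power_increasing) auto
      then have "Gp X' \<le> ennreal (2^k)" using g by (meson ennreal_leI order_trans)
      then show ?thesis using False by simp
    qed
  qed
  have "(\<integral>\<^sup>+X'. Gp X' \<partial>measure_pmf (step X)) \<le>
      (\<integral>\<^sup>+X'. ennreal (2^(k-1)) * indicator E X' + ennreal (2^k) * indicator (UNIV - E) X' \<partial>measure_pmf (step X))"
    by (rule nn_integral_mono_AE) (simp only: AE_measure_pmf_iff, blast intro: bound)
  also have "\<dots> = ennreal (2^(k-1)) * emeasure (measure_pmf (step X)) E + ennreal (2^k) * emeasure (measure_pmf (step X)) (UNIV - E)"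
    by (simp add: nn_integral_add nn_integral_cmult_indicator)
  also have "\<dots> = ennreal (2^(k-1) * P + 2^k * (1 - P))"
  proof -
    have "measure_pmf.prob (step X) (UNIV - E) = 1 - P" unfolding P_def
      using measure_pmf.prob_compl[of E "step X"] by simp
    moreover have P0: "0 \<le> P" unfolding P_def by simp
    moreover have "ennreal (2^(k-1)*P + 2^k*(1-P)) = ennreal (2^(k-1)*P) + ennreal (2^k*(1-P))"
      by (rule ennreal_plus) (use P0 P1 in auto)
    moreover have "ennreal (2^(k-1)*P) = ennreal (2^(k-1)) * ennreal P" using P0 by (simp add: ennreal_mult)
    moreover have "ennreal (2^k*(1-P)) = ennreal (2^k) * ennreal (1-P)" using P1 by (simp add: ennreal_mult)
    ultimately show ?thesis
      by (simp add: measure_pmf.emeasure_eq_measure P_def[symmetric])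
  qed
  also have "\<dots> \<le> ennreal ((1 - a/2) * 2^k)"
  proof (rule ennreal_leI)
    have "(2::real)^k = 2 * 2^(k-1)" using k1 by (metis Suc_diff_le diff_Suc_1 power_Suc)
    then show "2^(k-1) * P + 2^k * (1 - P) \<le> (1 - a/2) * 2^k" using aP by (simp add: algebra_simps)
  qed
  also have "\<dots> = ennreal (1 - a/2) * Gp X"
  proof -
    have "0 \<le> a" unfolding a_def using p1 by simp
    have "a \<le> 1" unfolding a_def using p0 p1 by (intro power_le_one) auto
    then have "0 \<le> 1 - a/2" by simp
    then show ?thesis using XH by (simp add: Gp_def ennreal_mult k_def A_def)
  qed
  finally show ?thesis unfolding a_def .
qed

lemma last_len: "length ys = Suc k \<Longrightarrow> last ys = ys!k"
  by (cases ys rule: rev_cases) (auto simp: nth_append)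

lemma step_healthy: "step healthy = return_pmf healthy"
  by (rule step_dead) (simp add: healthy_def)

abbreviation traj where "traj X0 k \<equiv> cp_traj n dd m \<theta> p X0 k"

lemma traj_Suc: "traj X0 (Suc k) = traj X0 k \<bind> (\<lambda>xs. map_pmf (\<lambda>y. xs @ [y]) (step (last xs)))"
  by (simp add: step_def)

lemma traj_support:
  "xs \<in> set_pmf (traj X0 k) \<Longrightarrow> length xs = Suc k \<and> (\<forall>t<k. xs!t = healthy \<longrightarrow> xs!Suc t = healthy)"
proof (induction k arbitrary: xs)
  case 0
  then show ?case by simp
next
  case (Suc k)
  from Suc.prems obtain ys y where ys: "ys \<in> set_pmf (traj X0 k)" "y \<in> set_pmf (step (last ys))" "xs = ys @ [y]"
    unfolding traj_Suc by auto
  have IH: "length ys = Suc k" "\<forall>t<k. ys!t = healthy \<longrightarrow> ys!Suc t = healthy" using Suc.IH[OF ys(1)] by auto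
  have "\<forall>t<Suc k. xs!t = healthy \<longrightarrow> xs!Suc t = healthy"
  proof (intro allI impI)
    fix t assume t: "t < Suc k" "xs!t = healthy"
    show "xs!Suc t = healthy"
    proof (cases "t < k")
      case True
      then show ?thesis using t IH ys(3) by (simp add: nth_append)
    next
      case False
      then have tk: "t = k" using t by simp
      then have "last ys = healthy" using t IH ys(3) last_len[OF IH(1)] by (simp add: nth_append)
      then have "y = healthy" using ys(2) step_healthy by simp
      then show ?thesis using tk IH ys(3) by (simp add: nth_append)
    qed
  qed
  then show ?case using IH ys(3) by simp
qed

lemma traj_pot:
  assumes nR: "n < 2^R"
  shows "j \<le> k \<Longrightarrow> (\<integral>\<^sup>+xs. Gp (xs!j) \<partial>measure_pmf (traj X0 k)) \<le> ennreal (1 - (1-p)^(2*R+2)/2) ^ j * Gp X0"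
proof (induction k arbitrary: j)
  case 0
  then show ?case by simp
next
  case (Suc k)
  define r where "r = ennreal (1 - (1-p)^(2*R+2)/2)"
  have eq: "(\<integral>\<^sup>+xs. Gp (xs!j) \<partial>measure_pmf (traj X0 (Suc k))) =
      (\<integral>\<^sup>+ys. (\<integral>\<^sup>+y. Gp ((ys @ [y])!j) \<partial>measure_pmf (step (last ys))) \<partial>measure_pmf (traj X0 k))"
    unfolding traj_Suc by simp
  show ?case
  proof (cases "j \<le> k")
    case True
    have "(\<integral>\<^sup>+ys. (\<integral>\<^sup>+y. Gp ((ys @ [y])!j) \<partial>measure_pmf (step (last ys))) \<partial>measure_pmf (traj X0 k))
        = (\<integral>\<^sup>+ys. Gp (ys!j) \<partial>measure_pmf (traj X0 k))"
    proof (rule nn_integral_cong_AE)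
      show "AE ys in measure_pmf (traj X0 k). (\<integral>\<^sup>+y. Gp ((ys @ [y])!j) \<partial>measure_pmf (step (last ys))) = Gp (ys!j)"
        unfolding AE_measure_pmf_iff
      proof
        fix ys assume "ys \<in> set_pmf (traj X0 k)"
        then have "j < length ys" using traj_support True by fastforce
        then show "(\<integral>\<^sup>+y. Gp ((ys @ [y])!j) \<partial>measure_pmf (step (last ys))) = Gp (ys!j)"
          by (simp add: nth_append)
      qed
    qed
    then show ?thesis using eq Suc.IH[OF True] by simp
  next
    case False
    then have j: "j = Suc k" using Suc.prems by simp
    have "(\<integral>\<^sup>+ys. (\<integral>\<^sup>+y. Gp ((ys @ [y])!j) \<partial>measure_pmf (step (last ys))) \<partial>measure_pmf (traj X0 k))
        \<le> (\<integral>\<^sup>+ys. r * Gp (ys!k) \<partial>measure_pmf (traj X0 k))"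
    proof (rule nn_integral_mono_AE)
      show "AE ys in measure_pmf (traj X0 k). (\<integral>\<^sup>+y. Gp ((ys @ [y])!j) \<partial>measure_pmf (step (last ys))) \<le> r * Gp (ys!k)"
        unfolding AE_measure_pmf_iff
      proof
        fix ys assume "ys \<in> set_pmf (traj X0 k)"
        then have l: "length ys = Suc k" using traj_support by fastforce
        then have "(\<integral>\<^sup>+y. Gp ((ys @ [y])!j) \<partial>measure_pmf (step (last ys))) = (\<integral>\<^sup>+y. Gp y \<partial>measure_pmf (step (last ys)))"
          using j by (simp add: nth_append)
        also have "\<dots> \<le> r * Gp (last ys)" unfolding r_def by (rule pot_step[OF nR])
        finally show "(\<integral>\<^sup>+y. Gp ((ys @ [y])!j) \<partial>measure_pmf (step (last ys))) \<le> r * Gp (ys!k)"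
          using last_len[OF l] by simp
      qed
    qed
    also have "\<dots> = r * (\<integral>\<^sup>+ys. Gp (ys!k) \<partial>measure_pmf (traj X0 k))"
      by (rule nn_integral_cmult) simp
    also have "\<dots> \<le> r * (r ^ k * Gp X0)"
      using Suc.IH[of k] unfolding r_def by (intro mult_left_mono) auto
    finally show ?thesis using eq j unfolding r_def by (simp add: mult.assoc)
  qed
qed

lemma Gp_ge1: "X \<noteq> healthy \<Longrightarrow> 1 \<le> Gp X"
  by (simp add: Gp_def)

lemma Gp_le: "Gp X \<le> ennreal (2^n)"
proof -
  have "(2::real) ^ (n - card (Aset X)) \<le> 2^n" by (intro power_increasing) auto
  then show ?thesis by (simp add: Gp_def ennreal_leI)
qed

lemma surv_bound:
  assumes nR: "n < 2^R"
  shows "survive_prob n dd m \<theta> p C k \<le> (1 - (1-p)^(2*R+2)/2) ^ nat \<lceil>real n powr C\<rceil> * 2^n"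
proof -
  define T where "T = nat \<lceil>real n powr C\<rceil>"
  define r where "r = 1 - (1-p)^(2*R+2)/2"
  define M where "M = traj (all_infected n) k"
  define Ev where "Ev = {xs. \<exists>t \<le> k. real n powr C \<le> real t \<and> xs ! t \<noteq> healthy}"
  have r0: "0 \<le> r"
  proof -
    have "(1-p)^(2*R+2) \<le> 1" using p0 p1 by (intro power_le_one) auto
    then show ?thesis unfolding r_def by simp
  qed
  have tT: "T \<le> t" if "real n powr C \<le> real t" for t
    using that unfolding T_def by (simp add: nat_le_iff ceiling_le_iff)
  have sp: "survive_prob n dd m \<theta> p C k = measure_pmf.prob M Ev"
    unfolding survive_prob_def M_def Ev_def by simp
  show ?thesis
  proof (cases "T \<le> k")
    case False
    then have "Ev = {}" unfolding Ev_def using tT by fastforce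
    then show ?thesis using sp r0 unfolding r_def[symmetric] T_def[symmetric] by simp
  next
    case True
    define F where "F = {xs. xs ! T \<noteq> healthy}"
    have sub: "Ev \<inter> set_pmf M \<subseteq> F"
    proof
      fix xs assume xs: "xs \<in> Ev \<inter> set_pmf M"
      then obtain t where t: "t \<le> k" "real n powr C \<le> real t" "xs ! t \<noteq> healthy" unfolding Ev_def by blast
      have supp: "\<forall>t<k. xs!t = healthy \<longrightarrow> xs!Suc t = healthy"
        using traj_support xs unfolding M_def by blast
      have Tt: "T \<le> t" using tT t(2) .
      show "xs \<in> F"
      proof (rule ccontr)
        assume "xs \<notin> F"
        then have h: "xs ! T = healthy" unfolding F_def by simp
        have "xs ! j = healthy" if "T \<le> j" "j \<le> t" for j
          using that
        proof (induction j rule: dec_induct)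
          case base show ?case by (rule h)
        next
          case (step j)
          then show ?case using supp t(1) by simp
        qed
        then show False using Tt t(3) by simp
      qed
    qed
    have "measure_pmf.prob M Ev = measure_pmf.prob M (Ev \<inter> set_pmf M)" by (simp add: measure_Int_set_pmf)
    also have "\<dots> \<le> measure_pmf.prob M F" using sub by (intro measure_pmf.finite_measure_mono) auto
    finally have pF: "measure_pmf.prob M Ev \<le> measure_pmf.prob M F" .
    have "ennreal (measure_pmf.prob M F) = emeasure (measure_pmf M) F"
      by (simp add: measure_pmf.emeasure_eq_measure)
    also have "\<dots> = (\<integral>\<^sup>+xs. indicator F xs \<partial>measure_pmf M)" by simp
    also have "\<dots> \<le> (\<integral>\<^sup>+xs. Gp (xs ! T) \<partial>measure_pmf M)"
      by (intro nn_integral_mono) (auto simp: F_def indicator_def Gp_ge1)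
    also have "\<dots> \<le> ennreal r ^ T * Gp (all_infected n)"
      unfolding M_def r_def by (rule traj_pot[OF nR True])
    also have "\<dots> \<le> ennreal r ^ T * ennreal (2^n)" by (intro mult_left_mono Gp_le) auto
    also have "\<dots> = ennreal (r ^ T * 2^n)" using r0 by (simp add: ennreal_mult ennreal_power)
    finally have "measure_pmf.prob M F \<le> r ^ T * 2^n" using r0 by (simp add: ennreal_le_iff)
    then show ?thesis using sp pF unfolding r_def T_def by linarith
  qed
qed

end

lemma matchings_finite: "finite (matchings n d)"
proof -
  define N where "N = d * n"
  have sub: "matchings n d \<subseteq> {f. (\<forall>h<N. f h < N) \<and> (\<forall>h. N \<le> h \<longrightarrow> f h = h)}"
    by (auto simp: matchings_def N_def)
  have "inj_on (\<lambda>f. restrict f {..<N}) {f. (\<forall>h<N. f h < N) \<and> (\<forall>h. N \<le> h \<longrightarrow> f h = h)}"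
  proof (rule inj_onI)
    fix f g assume f: "f \<in> {f. (\<forall>h<N. f h < N) \<and> (\<forall>h. N \<le> h \<longrightarrow> f h = h)}"
      and g: "g \<in> {f. (\<forall>h<N. f h < N) \<and> (\<forall>h. N \<le> h \<longrightarrow> f h = h)}"
      and e: "restrict f {..<N} = restrict g {..<N}"
    show "f = g"
    proof
      fix h show "f h = g h"
      proof (cases "h < N")
        case True
        then show ?thesis using fun_cong[OF e, of h] by simp
      next
        case False
        then show ?thesis using f g by simp
      qed
    qed
  qed
  moreover have "(\<lambda>f. restrict f {..<N}) ` {f. (\<forall>h<N. f h < N) \<and> (\<forall>h. N \<le> h \<longrightarrow> f h = h)}
      \<subseteq> PiE {..<N} (\<lambda>_. {..<N})"
    by (auto simp: PiE_def)
  then have "finite ((\<lambda>f. restrict f {..<N}) ` {f. (\<forall>h<N. f h < N) \<and> (\<forall>h. N \<le> h \<longrightarrow> f h = h)})"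
    by (rule finite_subset) (simp add: finite_PiE)
  ultimately have "finite {f. (\<forall>h<N. f h < N) \<and> (\<forall>h. N \<le> h \<longrightarrow> f h = h)}"
    using finite_imageD by blast
  then show ?thesis using sub finite_subset by blast
qed

lemma matchings_nonempty:
  assumes "even (d * n)"
  shows "matchings n d \<noteq> {}"
proof -
  define N where "N = d * n"
  have eN: "even N" using assms by (simp add: N_def)
  define m0 where "m0 = (\<lambda>h::nat. if h < N then (if even h then h + 1 else h - 1) else h)"
  have "m0 \<in> matchings n d" unfolding matchings_def
  proof (intro CollectI conjI allI impI)
    fix h assume h: "h < d * n"
    then have hN: "h < N" by (simp add: N_def)
    show "m0 h < d * n"
    proof (cases "even h")
      case True
      then have "h + 1 < N" using hN eN by (metis Suc_eq_plus1 Suc_lessI even_Suc)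
      then show ?thesis using True hN by (simp add: m0_def N_def)
    next
      case False
      then show ?thesis using hN by (simp add: m0_def N_def)
    qed
    show "m0 h \<noteq> h"
    proof (cases "even h")
      case False
      have "h \<noteq> 0"
      proof
        assume "h = 0" then show False using False by simp
      qed
      then show ?thesis using False hN by (simp add: m0_def)
    qed (use hN in \<open>simp add: m0_def\<close>)
    show "m0 (m0 h) = h"
    proof (cases "even h")
      case True
      then have "h + 1 < N" using hN eN by (metis Suc_eq_plus1 Suc_lessI even_Suc)
      then show ?thesis using True hN by (simp add: m0_def)
    next
      case False
      have "h \<noteq> 0"
      proof
        assume "h = 0" then show False using False by simp
      qed
      then have "even (h - 1)" "h - 1 < N" using False hN by auto
      then show ?thesis using False hN \<open>h \<noteq> 0\<close> by (simp add: m0_def)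
    qed
  next
    fix h assume "d * n \<le> h"
    then show "m0 h = h" by (simp add: m0_def N_def)
  qed
  then show ?thesis by blast
qed

lemma graph_bound:
  fixes p :: real and \<theta> :: nat
  assumes p0: "0 < p" and p1: "p < 1" and th: "2 \<le> \<theta>" and n: "1 \<le> n"
    and m: "m \<in> matchings n (\<theta>+1)"
  shows "survive_prob n (\<theta>+1) m \<theta> p (2 - 2 * ln (1-p) / ln 2) k \<le> 2^n * exp (-((1-p)^6/2) * real n^2)"
proof -
  interpret GP n \<theta> m p
    using m th p0 p1 by unfold_locales simp_all
  have "survive_prob n (Suc \<theta>) m \<theta> p (2 - 2 * ln (1-p) / ln 2) k \<le>
      (1 - (1-p)^(2*(nat \<lceil>log 2 n\<rceil> + 1)+2)/2) ^ nat \<lceil>real n powr (2 - 2 * ln (1-p) / ln 2)\<rceil> * 2^n"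
    by (rule surv_bound[OF R_pow[OF n]])
  also have "\<dots> \<le> 2^n * exp (-((1-p)^6/2) * real n^2)" by (rule final_real[OF p0 p1 n])
  finally show ?thesis by simp
qed

theorem theorem2:
  fixes p :: real and \<theta> :: nat
  assumes "0 < p" "p < 1" "2 \<le> \<theta>"
  shows "\<exists>C > 0. \<forall>\<epsilon> > 0. \<forall>\<^sub>F n in sequentially. even ((\<theta>+1) * n) \<longrightarrow>
           measure_pmf.prob (config_model n (\<theta>+1))
             {m. (SUP k. survive_prob n (\<theta>+1) m \<theta> p C k) > \<epsilon>} < \<epsilon>"
proof (intro exI[of _ "2 - 2 * ln (1-p) / ln 2"] conjI allI impI)
  have "ln (1-p) < 0" using assms by simp
  then have "2 * ln (1-p) / ln 2 < 0" by (intro divide_neg_pos) auto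
  then show "0 < 2 - 2 * ln (1-p) / ln 2" by simp
  define C where "C = 2 - 2 * ln (1-p) / ln 2"
  fix \<epsilon> :: real assume e: "0 < \<epsilon>"
  define \<kappa> where "\<kappa> = (1-p)^6/2"
  have k0: "0 < \<kappa>" unfolding \<kappa>_def using assms by simp
  have lim: "(\<lambda>n::nat. 2^n * exp(-\<kappa> * real n^2)) \<longlonglongrightarrow> 0"
    using k0 by real_asymp
  have ev: "\<forall>\<^sub>F n in sequentially. 2^n * exp(-\<kappa> * real n^2) < \<epsilon>"
    using order_tendstoD(2)[OF lim e] .
  have ev1: "\<forall>\<^sub>F n in sequentially. (1::nat) \<le> n" by (rule eventually_ge_at_top)
  show "\<forall>\<^sub>F n in sequentially. even ((\<theta>+1) * n) \<longrightarrow>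
           measure_pmf.prob (config_model n (\<theta>+1))
             {m. (SUP k. survive_prob n (\<theta>+1) m \<theta> p (2 - 2 * ln (1-p) / ln 2) k) > \<epsilon>} < \<epsilon>"
    using ev ev1
  proof eventually_elim
    case (elim n)
    show ?case
    proof
      assume even: "even ((\<theta>+1) * n)"
      have fin: "finite (matchings n (\<theta>+1))" by (rule matchings_finite)
      have ne: "matchings n (\<theta>+1) \<noteq> {}" by (rule matchings_nonempty[OF even])
      have supp: "set_pmf (config_model n (\<theta>+1)) = matchings n (\<theta>+1)"
        unfolding config_model_def using fin ne by simp
      have "set_pmf (config_model n (\<theta>+1)) \<inter>
          {m. (SUP k. survive_prob n (\<theta>+1) m \<theta> p (2 - 2 * ln (1-p) / ln 2) k) > \<epsilon>} = {}"
      proof (rule ccontr)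
        assume "\<not> ?thesis"
        then obtain m where m: "m \<in> matchings n (\<theta>+1)"
          and gt: "(SUP k. survive_prob n (\<theta>+1) m \<theta> p (2 - 2 * ln (1-p) / ln 2) k) > \<epsilon>"
          using supp by blast
        have "(SUP k. survive_prob n (\<theta>+1) m \<theta> p (2 - 2 * ln (1-p) / ln 2) k) \<le> 2^n * exp (-\<kappa> * real n^2)"
          unfolding \<kappa>_def
        proof (rule cSUP_least)
          fix k
          show "survive_prob n (\<theta>+1) m \<theta> p (2 - 2 * ln (1-p) / ln 2) k \<le> 2^n * exp (-((1-p)^6/2) * real n^2)"
            by (rule graph_bound[OF assms(1,2,3) elim(2) m])
        qed simp
        then show False using gt elim(1) by simp
      qed
      then have "measure_pmf.prob (config_model n (\<theta>+1))
             {m. (SUP k. survive_prob n (\<theta>+1) m \<theta> p (2 - 2 * ln (1-p) / ln 2) k) > \<epsilon>} = 0"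
        by (simp add: measure_pmf_zero_iff)
      then show "measure_pmf.prob (config_model n (\<theta>+1))
             {m. (SUP k. survive_prob n (\<theta>+1) m \<theta> p (2 - 2 * ln (1-p) / ln 2) k) > \<epsilon>} < \<epsilon>"
        using e by simp
    qed
  qed
qed

end
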